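(* Let $b_1,\dots,b_5$ and $\alpha_1,\dots,\alpha_5$ be positive real numbers with $\sum_{i=1}^5\alpha_i=\pi$ (in particular $(b_1,\dots,b_5)$ may be any rearrangement of given positive reals $a_1,\dots,a_5$ with $b_1=a_1$). Then $$\sum_{i=1}^5 b_i\cos\alpha_i\;\le\;\frac{1+\sqrt5}{4}\cdot\frac{1}{b_1b_2b_3b_4b_5}\,\phi(b_1^2,b_2^2,b_3^2,b_4^2,b_5^2).$$
   Context: For real numbers $x_1,\dots,x_5$, define $\phi(x_1,x_2,x_3,x_4,x_5)=x_1x_2x_3+x_2x_3x_4+x_3x_4x_5+x_4x_5x_1+x_5x_1x_2$. *)

theory Defs
  imports Complex_Main
begin

definition phi :: "real \<Rightarrow> real \<Rightarrow> real \<Rightarrow> real \<Rightarrow> real \<Rightarrow> real" where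
  "phi x1 x2 x3 x4 x5 = x1*x2*x3 + x2*x3*x4 + x3*x4*x5 + x4*x5*x1 + x5*x1*x2"

end

theory Submission imports Defs begin
lemma quad:
  fixes p1 p2 p3 p4 p5 s :: real
  assumes "s^2 = 5" "s > 0"
  shows "p1*p2+p2*p3+p3*p4+p4*p5-p5*p1 \<le> (1+s)/4*(p1^2+p2^2+p3^2+p4^2+p5^2)"
proof -
  define r1 where "r1 = p1"
  define r2 where "r2 = -p2"
  define r3 where "r3 = p3"
  define r4 where "r4 = -p4"
  define r5 where "r5 = p5"
  define c where "c = (1+s)/4"
  have cc: "4*c*c = 2*c+1" using assms unfolding c_def by (simp add: field_simps power2_eq_square)
  have s3: "s < 3"
  proof (rule ccontr)
    assume "\<not> s < 3"
    then have "3*3 \<le> s*s" by (intro mult_mono) auto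
    then show False using assms by (simp add: power2_eq_square)
  qed
  have c1: "4*c - 1 > 0" "3 - 2*c > 0" using assms s3 unfolding c_def by simp_all
  define k where "k = (3 - 2*c)*(4*c-1)"
  have kpos: "k > 0" unfolding k_def using c1 by simp
  define u1 where "u1 = r5+r2+2*c*r1"
  define u2 where "u2 = r1+r3+2*c*r2"
  define u3 where "u3 = r2+r4+2*c*r3"
  define u4 where "u4 = r3+r5+2*c*r4"
  define u5 where "u5 = r4+r1+2*c*r5"
  have key: "k*(2*(2+2*c)*(c*(r1^2+r2^2+r3^2+r4^2+r5^2) + (r1*r2+r2*r3+r3*r4+r4*r5+r5*r1)))
    = k*(u1^2+u2^2+u3^2+u4^2+u5^2) + ((2*u1-u5-u2)^2 + (2*u2-u1-u3)^2 + (2*u3-u2-u4)^2 + (2*u4-u3-u5)^2 + (2*u5-u4-u1)^2)"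
    unfolding k_def u1_def u2_def u3_def u4_def u5_def using cc by algebra
  have "0 \<le> k*(2*(2+2*c)*(c*(r1^2+r2^2+r3^2+r4^2+r5^2) + (r1*r2+r2*r3+r3*r4+r4*r5+r5*r1)))"
    unfolding key using kpos by (intro add_nonneg_nonneg mult_nonneg_nonneg) auto
  moreover have "2+2*c > 0" using c1 by simp
  ultimately have "0 \<le> c*(r1^2+r2^2+r3^2+r4^2+r5^2) + (r1*r2+r2*r3+r3*r4+r4*r5+r5*r1)"
    using kpos by (simp add: zero_le_mult_iff)
  then show ?thesis unfolding r1_def r2_def r3_def r4_def r5_def c_def[symmetric] by (simp add: algebra_simps)
qed

lemma cos_shift: "cos (b::real) = cos (a+b) * cos a + sin (a+b) * sin a"
  using cos_diff[of "a+b" a] by simp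

lemma cyc:
  fixes y1 y2 y3 y4 y5 t1 t2 t3 t4 t5 :: real
  assumes "t1+t2+t3+t4+t5 = pi"
  shows "y1*y2*cos t1 + y2*y3*cos t2 + y3*y4*cos t3 + y4*y5*cos t4 + y5*y1*cos t5
    \<le> (1+sqrt 5)/4*(y1^2+y2^2+y3^2+y4^2+y5^2)"
proof -
  define f2 where "f2 = t1"
  define f3 where "f3 = f2 + t2"
  define f4 where "f4 = f3 + t3"
  define f5 where "f5 = f4 + t4"
  have f5': "f5 = pi - t5" using assms unfolding f5_def f4_def f3_def f2_def by simp
  define p1 where "p1 = y1"
  define p2 where "p2 = y2 * cos f2"
  define p3 where "p3 = y3 * cos f3"
  define p4 where "p4 = y4 * cos f4"
  define p5 where "p5 = y5 * cos f5"
  define q1 where "q1 = (0::real)"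
  define q2 where "q2 = y2 * sin f2"
  define q3 where "q3 = y3 * sin f3"
  define q4 where "q4 = y4 * sin f4"
  define q5 where "q5 = y5 * sin f5"
  have s5: "sqrt 5 ^ 2 = 5" "sqrt 5 > 0" by simp_all
  have A: "p1*p2+p2*p3+p3*p4+p4*p5-p5*p1 \<le> (1+sqrt 5)/4*(p1^2+p2^2+p3^2+p4^2+p5^2)"
    by (rule quad[OF s5])
  have B: "q1*q2+q2*q3+q3*q4+q4*q5-q5*q1 \<le> (1+sqrt 5)/4*(q1^2+q2^2+q3^2+q4^2+q5^2)"
    by (rule quad[OF s5])
  have e1: "y1*y2*cos t1 = p1*p2+q1*q2" unfolding p1_def p2_def q1_def q2_def f2_def by simp
  have e2: "y2*y3*cos t2 = p2*p3+q2*q3" unfolding p2_def p3_def q2_def q3_def f3_def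
    using cos_shift[of t2 f2] by (simp add: algebra_simps)
  have e3: "y3*y4*cos t3 = p3*p4+q3*q4" unfolding p3_def p4_def q3_def q4_def f4_def
    using cos_shift[of t3 f3] by (simp add: algebra_simps)
  have e4: "y4*y5*cos t4 = p4*p5+q4*q5" unfolding p4_def p5_def q4_def q5_def f5_def
    using cos_shift[of t4 f4] by (simp add: algebra_simps)
  have e5: "y5*y1*cos t5 = -(p5*p1+q5*q1)" unfolding p5_def p1_def q1_def f5' by simp
  have sq: "(y * cos f)^2 + (y * sin f)^2 = y^2" for y f :: real
  proof -
    have "(y * cos f)^2 + (y * sin f)^2 = y^2 * ((sin f)^2 + (cos f)^2)" by (simp only: power_mult_distrib distrib_left add.commute)
    then show ?thesis by simp
  qed
  have e6: "y1^2+y2^2+y3^2+y4^2+y5^2 = (p1^2+p2^2+p3^2+p4^2+p5^2) + (q1^2+q2^2+q3^2+q4^2+q5^2)"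
    unfolding p1_def p2_def p3_def p4_def p5_def q1_def q2_def q3_def q4_def q5_def
    using sq[of y2 f2] sq[of y3 f3] sq[of y4 f4] sq[of y5 f5] by simp
  show ?thesis unfolding e1 e2 e3 e4 e5 e6 distrib_left using A[unfolded distrib_left] B[unfolded distrib_left] by linarith
qed

lemma sqprod: "x > 0 \<Longrightarrow> y > 0 \<Longrightarrow> b > 0 \<Longrightarrow> x*y = b^2 \<Longrightarrow> sqrt x * sqrt y = (b::real)"
  by (metis less_imp_le real_sqrt_mult real_sqrt_unique)

theorem lemma2:
  fixes b1 b2 b3 b4 b5 a1 a2 a3 a4 a5 :: real
  assumes "b1 > 0" "b2 > 0" "b3 > 0" "b4 > 0" "b5 > 0"
    and "a1 > 0" "a2 > 0" "a3 > 0" "a4 > 0" "a5 > 0"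
    and "a1 + a2 + a3 + a4 + a5 = pi"
  shows "b1 * cos a1 + b2 * cos a2 + b3 * cos a3 + b4 * cos a4 + b5 * cos a5
    \<le> (1 + sqrt 5) / 4 * (1 / (b1*b2*b3*b4*b5)) * phi (b1^2) (b2^2) (b3^2) (b4^2) (b5^2)"
proof -
  define T1 where "T1 = b1*b2*b3/(b4*b5)"
  define T2 where "T2 = b3*b4*b5/(b1*b2)"
  define T3 where "T3 = b5*b1*b2/(b3*b4)"
  define T4 where "T4 = b2*b3*b4/(b5*b1)"
  define T5 where "T5 = b4*b5*b1/(b2*b3)"
  have pos: "T1 > 0" "T2 > 0" "T3 > 0" "T4 > 0" "T5 > 0"
    unfolding T1_def T2_def T3_def T4_def T5_def using assms(1-5) by simp_all
  have m1: "sqrt T1 * sqrt T2 = b3" using pos assms(1-5)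
    by (intro sqprod) (auto simp: T1_def T2_def field_simps power2_eq_square)
  have m2: "sqrt T2 * sqrt T3 = b5" using pos assms(1-5)
    by (intro sqprod) (auto simp: T3_def T2_def field_simps power2_eq_square)
  have m3: "sqrt T3 * sqrt T4 = b2" using pos assms(1-5)
    by (intro sqprod) (auto simp: T3_def T4_def field_simps power2_eq_square)
  have m4: "sqrt T4 * sqrt T5 = b4" using pos assms(1-5)
    by (intro sqprod) (auto simp: T5_def T4_def field_simps power2_eq_square)
  have m5: "sqrt T5 * sqrt T1 = b1" using pos assms(1-5)
    by (intro sqprod) (auto simp: T1_def T5_def field_simps power2_eq_square)
  have C: "sqrt T1 * sqrt T2 * cos a3 + sqrt T2 * sqrt T3 * cos a5 + sqrt T3 * sqrt T4 * cos a2
      + sqrt T4 * sqrt T5 * cos a4 + sqrt T5 * sqrt T1 * cos a1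
    \<le> (1+sqrt 5)/4*((sqrt T1)^2+(sqrt T2)^2+(sqrt T3)^2+(sqrt T4)^2+(sqrt T5)^2)"
    by (rule cyc) (use assms(11) in simp)
  have sq: "(sqrt T1)^2+(sqrt T2)^2+(sqrt T3)^2+(sqrt T4)^2+(sqrt T5)^2 = T1+T2+T3+T4+T5"
    using pos by simp
  have ph: "1 / (b1*b2*b3*b4*b5) * phi (b1^2) (b2^2) (b3^2) (b4^2) (b5^2) = T1+T2+T3+T4+T5"
    unfolding phi_def T1_def T2_def T3_def T4_def T5_def using assms(1-5)
    by (simp add: field_simps power2_eq_square)
  show ?thesis using C unfolding m1 m2 m3 m4 m5 sq mult.assoc[of "(1 + sqrt 5) / 4"] ph by linarith
qed

end
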